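(* Fix a cell with no source term ($S=0$) and total energy $E=1$, and a positive integer $N_{obj}$. Start from a finite population of $N^0\ge1$ particles with positive weights summing to $1$, and apply repeatedly (with fresh independent uniform random variables at each iteration) the cell-based population control step with non-conservative splitting described in the context, each time to the population produced by the previous iteration. Let $N^l$ be the number of particles in the cell after the $l$-th iteration. Then $\lim_{l\to\infty}\mathbb{P}(N^l=N_{obj})=1$; more precisely, there exists $\lambda>0$ such that $\mathbb{P}(N^l\neq N_{obj})\le e^{-l\lambda}$ for all $l$.
   Context: Cell-based population control step for a single cell. Input: a finite collection of existing particles with positive weights $w_1,\dots,w_N$, their total energy $E=\sum_p w_p$, a source energy $S\ge0$, and a positive integer $N_{obj}$, with $E+S>0$. (1) Set $w_{obj}=(E+S)/N_{obj}$. (2) If $S>0$, emit $N^{vol}=\max(1,\lfloor S/w_{obj}\rfloor)$ particles of weight $S/N^{vol}$; otherwise none. (3) If $E>0$, for each existing particle $p$ draw independently $u_p\sim\mathcal U(0,1)$, set $I_p=\lfloor w_p/w_{obj}\rfloor$, $R_p=w_p/w_{obj}-I_p$. If $I_p=0$ (Russian Roulette): the particle is killed if $R_p<u_p$, otherwise its weight becomes $w_{obj}$. If $I_p\ge1$ (Splitting): with $N^{split}_p=I_p+\mathbf 1_{\{u_p<R_p\}}$, the particle is replaced by $N^{split}_p$ copies each of weight $w_{obj}$ (non-conservative splitting). (4) Renormalization: multiply all particle weights by $c=(E+S)/(\text{total weight after (2)-(3)})$. (5) Non-void correction: if $S=0$ and no particle remains after (3), the population becomes a single particle of weight $E$. 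*)

theory Defs
  imports "HOL-Probability.Probability"
begin

text \<open>The per-particle uniform random numbers of one step are given as a
  function u :: nat => real, u p being the number attached to the p-th particle
  (list position) of the existing population.\<close>

definition pc_particle :: "real \<Rightarrow> real \<Rightarrow> real \<Rightarrow> real list" where
  "pc_particle wobj w up =
     (let I = nat \<lfloor>w / wobj\<rfloor>; R = w / wobj - real I in
      if I = 0 then (if R < up then [] else [wobj])
      else replicate (I + (if up < R then 1 else 0)) wobj)"

definition pc_step :: "nat \<Rightarrow> real \<Rightarrow> real list \<Rightarrow> (nat \<Rightarrow> real) \<Rightarrow> real list" where
  "pc_step Nobj S ws u =
     (let E = sum_list ws;
          wobj = (E + S) / real Nobj;
          nvol = max 1 (nat \<lfloor>S / wobj\<rfloor>);
          vol = (if S > 0 then replicate nvol (S / real nvol) else []);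
          ex = (if E > 0 then concat (map (\<lambda>p. pc_particle wobj (ws ! p) (u p)) [0..<length ws])
                else ws);
          pop = vol @ ex;
          c = (E + S) / sum_list pop
      in if S = 0 \<and> ex = [] then [E] else map (\<lambda>w. c * w) pop)"

text \<open>Iterating the step with S = 0; omega (l, p) is the uniform number used for
  particle p at iteration l+1.\<close>
fun pc_iter :: "nat \<Rightarrow> real list \<Rightarrow> (nat \<times> nat \<Rightarrow> real) \<Rightarrow> nat \<Rightarrow> real list" where
  "pc_iter Nobj ws0 \<omega> 0 = ws0"
| "pc_iter Nobj ws0 \<omega> (Suc l) = pc_step Nobj 0 (pc_iter Nobj ws0 \<omega> l) (\<lambda>p. \<omega> (l, p))"

definition unif_space :: "(nat \<times> nat \<Rightarrow> real) measure" where
  "unif_space = PiM UNIV (\<lambda>_. uniform_measure lborel {0<..<1})"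

end

theory Submission
  imports Defs
begin

definition unif :: "nat \<Rightarrow> real list" where "unif n = replicate n (1 / real n)"

definition plen :: "nat \<Rightarrow> real \<Rightarrow> real \<Rightarrow> nat" where
  "plen N w u = length (pc_particle (1 / real N) w u)"

definition cnt :: "nat \<Rightarrow> real list \<Rightarrow> (nat \<Rightarrow> real) \<Rightarrow> nat" where
  "cnt N ws u = (\<Sum>p<length ws. plen N (ws ! p) (u p))"

lemma plen_eq: "plen N w u = (let x = w * real N; I = nat \<lfloor>x\<rfloor>; R = x - real I in
   if I = 0 then (if R < u then 0 else 1) else I + (if u < R then 1 else 0))"
  by (simp add: plen_def pc_particle_def Let_def)

lemma sum_unif[simp]: "n > 0 \<Longrightarrow> sum_list (unif n) = 1"
  by (simp add: unif_def sum_list_replicate)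

lemma length_unif[simp]: "length (unif n) = n" by (simp add: unif_def)

lemma step_eq:
  assumes N: "N > 0" and s: "sum_list ws = 1"
  shows "pc_step N 0 ws u = unif (max 1 (cnt N ws u))"
proof -
  define ex where "ex = concat (map (\<lambda>p. pc_particle (1 / real N) (ws ! p) (u p)) [0..<length ws])"
  have len: "length ex = cnt N ws u"
    unfolding ex_def cnt_def plen_def length_concat map_map comp_def
    by (simp add: interv_sum_list_conv_sum_set_nat atLeast0LessThan)
  have setex: "\<forall>y\<in>set ex. y = 1 / real N"
    unfolding ex_def by (auto simp: pc_particle_def Let_def split: if_splits)
  have rep: "ex = replicate (cnt N ws u) (1 / real N)"
    using replicate_length_same[OF setex] len by simp
  have st: "pc_step N 0 ws u = (if ex = [] then [1] else map (\<lambda>w. (1 / sum_list ex) * w) ex)"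
    unfolding pc_step_def Let_def ex_def using s by simp
  show ?thesis
  proof (cases "cnt N ws u = 0")
    case True
    then have "ex = []" using len by simp
    then show ?thesis using st True by (simp add: unif_def)
  next
    case False
    then have "ex \<noteq> []" using len by auto
    then show ?thesis using st False N
      by (simp add: unif_def rep sum_list_replicate map_replicate max_def)
  qed
qed

lemma iter_props:
  assumes N: "N > 0" and s: "sum_list ws0 = 1"
  shows "sum_list (pc_iter N ws0 \<omega> l) = 1"
proof (induction l)
  case 0 then show ?case using s by simp
next
  case (Suc l) then show ?case using N by (simp add: step_eq)
qed

lemma iter_Suc:
  assumes N: "N > 0" and s: "sum_list ws0 = 1"
  shows "pc_iter N ws0 \<omega> (Suc l) = unif (max 1 (cnt N (pc_iter N ws0 \<omega> l) (\<lambda>p. \<omega> (l, p))))"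
  using iter_props[OF N s] N by (simp add: step_eq)

lemma iter_dep:
  "(\<And>k p. k < l \<Longrightarrow> \<omega> (k, p) = \<omega>' (k, p)) \<Longrightarrow> pc_iter N ws0 \<omega> l = pc_iter N ws0 \<omega>' l"
proof (induction l)
  case 0 then show ?case by simp
next
  case (Suc l)
  have "pc_iter N ws0 \<omega> l = pc_iter N ws0 \<omega>' l" using Suc by auto
  moreover have "(\<lambda>p. \<omega> (l, p)) = (\<lambda>p. \<omega>' (l, p))" using Suc by auto
  ultimately show ?case by simp
qed

lemma plen_le: "plen N w u \<le> nat \<lfloor>w * real N\<rfloor> + 1"
  by (simp add: plen_eq Let_def)

lemma plen_le0: "nat \<lfloor>w * real N\<rfloor> = 0 \<Longrightarrow> plen N w u \<le> 1"
  by (simp add: plen_eq Let_def)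

lemma floor_sum_le:
  assumes N: "N > 0" and pos: "\<forall>w\<in>set ws. w \<ge> 0" and s: "sum_list ws = 1"
  shows "(\<Sum>p<length ws. nat \<lfloor>ws ! p * real N\<rfloor>) \<le> N"
proof -
  have "real (\<Sum>p<length ws. nat \<lfloor>ws ! p * real N\<rfloor>) = (\<Sum>p<length ws. real (nat \<lfloor>ws ! p * real N\<rfloor>))"
    by simp
  also have "\<dots> \<le> (\<Sum>p<length ws. ws ! p * real N)"
  proof (rule sum_mono)
    fix p assume "p \<in> {..<length ws}"
    then have "ws ! p \<ge> 0" using pos by auto
    then show "real (nat \<lfloor>ws ! p * real N\<rfloor>) \<le> ws ! p * real N"
      by (simp add: of_nat_nat)
  qed
  also have "\<dots> = sum_list ws * real N"
    by (simp add: sum_list_sum_nth sum_distrib_right atLeast0LessThan)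
  finally have "real (\<Sum>p<length ws. nat \<lfloor>ws ! p * real N\<rfloor>) \<le> real N" using s by simp
  then show ?thesis by (simp only: of_nat_le_iff)
qed

lemma cnt_le_gen:
  assumes N: "N > 0" and pos: "\<forall>w\<in>set ws. w \<ge> 0" and s: "sum_list ws = 1"
  shows "cnt N ws u \<le> N + length ws"
proof -
  have "cnt N ws u \<le> (\<Sum>p<length ws. nat \<lfloor>ws ! p * real N\<rfloor> + 1)"
    unfolding cnt_def by (rule sum_mono) (rule plen_le)
  also have "\<dots> = (\<Sum>p<length ws. nat \<lfloor>ws ! p * real N\<rfloor>) + length ws"
    by (simp only: sum.distrib) simp
  finally show ?thesis using floor_sum_le[OF assms] by simp
qed

lemma cnt_le_unif:
  assumes N: "N > 0" and n: "n > 0"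
  shows "cnt N (unif n) u \<le> max n (2 * N)"
proof (cases "n > N")
  case True
  have "cnt N (unif n) u \<le> (\<Sum>p<length (unif n). 1)"
    unfolding cnt_def
  proof (rule sum_mono)
    fix p assume "p \<in> {..<length (unif n)}"
    then have "unif n ! p = 1 / real n" by (simp add: unif_def)
    moreover have "1 / real n * real N < 1" using True by (simp add: field_simps)
    ultimately show "plen N (unif n ! p) (u p) \<le> 1"
      by (intro plen_le0) (simp add: floor_less_iff)
  qed
  then show ?thesis by simp
next
  case False
  have "cnt N (unif n) u \<le> N + n"
    using cnt_le_gen[OF N, of "unif n" u] n sum_unif[OF n] by (simp add: unif_def)
  then show ?thesis using False by simp
qed

lemma good:
  assumes N: "N > 0" and pos: "\<forall>w\<in>set ws. w > 0" and s: "sum_list ws = 1"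
  shows "\<exists>a b. (\<forall>p<length ws. 0 \<le> a p \<and> a p < b p \<and> b p \<le> 1) \<and>
     (\<forall>u. (\<forall>p<length ws. a p < u p \<and> u p < b p) \<longrightarrow> cnt N ws u = N)"
proof -
  define n where "n = length ws"
  define x where "x p = ws ! p * real N" for p
  define I where "I p = nat \<lfloor>x p\<rfloor>" for p
  define R where "R p = x p - real (I p)" for p
  have xpos: "x p > 0" if "p < n" for p using pos that N by (auto simp: x_def n_def)
  have R01: "0 \<le> R p \<and> R p < 1" if "p < n" for p
    using xpos[OF that] by (simp add: R_def I_def of_nat_nat) linarith
  define k where "k = N - (\<Sum>p<n. I p)"
  have sI: "(\<Sum>p<n. I p) \<le> N"
    using floor_sum_le[OF N _ s] pos unfolding I_def x_def n_def by force
  have "(\<Sum>p<n. x p) = (\<Sum>p<n. ws ! p) * real N"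
    by (simp add: x_def sum_distrib_right)
  also have "(\<Sum>p<n. ws ! p) = 1" using s by (simp add: n_def sum_list_sum_nth atLeast0LessThan)
  finally have sx: "(\<Sum>p<n. x p) = real N" by simp
  have sR: "(\<Sum>p<n. R p) = real k"
    using sI sx by (simp add: R_def k_def sum_subtractf of_nat_diff)
  define P where "P = {p. p < n \<and> R p > 0}"
  have finP: "finite P" by (simp add: P_def)
  have "(\<Sum>p<n. R p) = (\<Sum>p\<in>P. R p)"
    by (rule sum.mono_neutral_right) (use R01 in \<open>force simp: P_def\<close>)+
  also have "\<dots> \<le> (\<Sum>p\<in>P. 1)"
    by (rule sum_mono) (use R01 in \<open>auto simp: P_def less_imp_le\<close>)
  finally have "k \<le> card P" using sR by simp
  then obtain C where CP: "C \<subseteq> P" and cC: "card C = k" using ex_card by blast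
  have Cn: "C \<subseteq> {..<n}" using CP by (auto simp: P_def)
  define a where "a p = (if p \<in> C then 0 else R p)" for p
  define b where "b p = (if p \<in> C then R p else 1)" for p
  have ab: "\<forall>p<length ws. 0 \<le> a p \<and> a p < b p \<and> b p \<le> 1"
    using R01 CP by (force simp: a_def b_def P_def n_def less_imp_le)
  have pl: "plen N (ws ! p) (u p) = I p + (if p \<in> C then 1 else 0)"
    if p: "p < n" and u: "a p < u p \<and> u p < b p" for u p
  proof -
    have e: "plen N (ws ! p) (u p) = (if I p = 0 then (if R p < u p then 0 else 1) else I p + (if u p < R p then 1 else 0))"
      by (simp add: plen_eq Let_def I_def R_def x_def)
    show ?thesis
    proof (cases "p \<in> C")
      case True then show ?thesis using u e by (auto simp: a_def b_def)
    next
      case False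
      then have "R p < u p" using u by (simp add: a_def)
      moreover have "I p = 0 \<Longrightarrow> R p > 0" using xpos[OF p] by (simp add: R_def)
      ultimately show ?thesis using e False by auto
    qed
  qed
  have "cnt N ws u = N" if u: "\<forall>p<length ws. a p < u p \<and> u p < b p" for u
  proof -
    have "cnt N ws u = (\<Sum>p<n. I p + (if p \<in> C then 1 else 0))"
      unfolding cnt_def n_def[symmetric] by (rule sum.cong) (use pl u n_def in auto)
    also have "\<dots> = (\<Sum>p<n. I p) + card C"
    proof -
      have "(\<Sum>p<n. (if p \<in> C then 1 else 0::nat)) = card C"
        using Cn by (simp add: sum.If_cases) (simp add: Int_absorb1[OF Cn] Int_absorb2[OF Cn])
      then show ?thesis by (simp add: sum.distrib)
    qed
    finally show ?thesis using cC sI k_def by simp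
  qed
  then show ?thesis using ab by blast
qed

lemma good_unif:
  assumes N: "N > 0" and u: "\<forall>p<N. 0 < u p \<and> u p < 1"
  shows "cnt N (unif N) u = N"
proof -
  have "plen N (unif N ! p) (u p) = 1" if "p < N" for p
    using that u[rule_format, of p] N by (simp add: plen_eq unif_def Let_def)
  then show ?thesis by (simp add: cnt_def)
qed

definition Uu :: "real measure" where "Uu = uniform_measure lborel {0<..<1}"

lemma sets_Uu[measurable_cong, simp]: "sets Uu = sets borel"
  by (simp add: Uu_def)

lemma space_Uu[simp]: "space Uu = UNIV"
  by (simp add: Uu_def)

lemma prob_Uu: "prob_space Uu"
  unfolding Uu_def by (rule prob_space_uniform_measure) auto

lemma meas_plen[measurable]: "plen N w \<in> borel \<rightarrow>\<^sub>M count_space UNIV"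
  unfolding plen_eq Let_def by measurable

lemma meas_cnt:
  assumes "\<And>p. (l, p) \<in> K"
  shows "(\<lambda>x. cnt N t (\<lambda>p. x (l, p))) \<in> PiM K (\<lambda>_. Uu) \<rightarrow>\<^sub>M count_space UNIV"
  unfolding cnt_def using assms by measurable

lemma unif_space_eq: "unif_space = PiM UNIV (\<lambda>_. Uu)"
  by (simp add: unif_space_def Uu_def)

lemma pps: "product_prob_space (\<lambda>_. Uu)"
  using prob_Uu by (simp add: product_prob_space_def product_sigma_finite_def
      product_prob_space_axioms_def prob_space_imp_sigma_finite)

lemma ps: "prob_space unif_space"
proof -
  interpret product_prob_space "\<lambda>_. Uu" UNIV by (rule pps)
  show ?thesis unfolding unif_space_eq by (rule P.prob_space_axioms)
qed

lemma iter_range: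
  "pc_iter N ws0 x l \<in> insert ws0 (range (\<lambda>m. unif (max 1 m)))" if "N > 0" "sum_list ws0 = 1"
  using that by (cases l) (auto simp: iter_Suc[OF that] simp del: pc_iter.simps(2))

lemma meas_iter:
  assumes N: "N > 0" and s: "sum_list ws0 = 1"
  shows "(\<And>k p. k < l \<Longrightarrow> (k, p) \<in> K) \<Longrightarrow>
    {x \<in> space (PiM K (\<lambda>_. Uu)). pc_iter N ws0 x l = t} \<in> sets (PiM K (\<lambda>_. Uu))"
proof (induction l arbitrary: t)
  case 0 then show ?case by (cases "ws0 = t") auto
next
  case (Suc l)
  let ?S = "space (PiM K (\<lambda>_. Uu))"
  let ?T = "insert ws0 (range (\<lambda>m. unif (max 1 m)))"
  have "{x \<in> ?S. pc_iter N ws0 x (Suc l) = t} =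
     (\<Union>s\<in>?T. {x \<in> ?S. pc_iter N ws0 x l = s} \<inter>
        ((\<lambda>x. unif (max 1 (cnt N s (\<lambda>p. x (l, p))))) -` {t} \<inter> ?S))"
    apply (rule set_eqI)
    subgoal for x using iter_range[OF N s, of x l]
      by (auto simp: iter_Suc[OF N s] simp del: pc_iter.simps(2) intro!: bexI[of _ "pc_iter N ws0 x l"])
    done
  also have "\<dots> \<in> sets (PiM K (\<lambda>_. Uu))"
  proof (rule sets.countable_UN'')
    show "countable ?T" by simp
  next
    fix s
    have m: "(\<lambda>x. unif (max 1 (cnt N s (\<lambda>p. x (l, p))))) \<in> PiM K (\<lambda>_. Uu) \<rightarrow>\<^sub>M count_space UNIV"
      by (rule measurable_compose[OF meas_cnt]) (use Suc.prems in auto)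
    show "{x \<in> ?S. pc_iter N ws0 x l = s} \<inter>
        ((\<lambda>x. unif (max 1 (cnt N s (\<lambda>p. x (l, p))))) -` {t} \<inter> ?S) \<in> sets (PiM K (\<lambda>_. Uu))"
      using Suc.IH[of s] Suc.prems measurable_sets[OF m, of "{t}"] by auto
  qed
  finally show ?case .
qed

lemma indep_unif:
  fixes KA KB :: "(nat \<times> nat) set"
  assumes "KA \<inter> KB = {}"
    and Xa: "Xa \<in> sets (PiM KA (\<lambda>_. Uu))" and Xb: "Xb \<in> sets (PiM KB (\<lambda>_. Uu))"
  shows "measure unif_space {x \<in> space unif_space. restrict x KA \<in> Xa \<and> restrict x KB \<in> Xb} =
    measure unif_space {x \<in> space unif_space. restrict x KA \<in> Xa} *
    measure unif_space {x \<in> space unif_space. restrict x KB \<in> Xb}"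
proof -
  interpret product_prob_space "\<lambda>_. Uu" UNIV by (rule pps)
  have rv: "(\<lambda>x. x i) \<in> PiM UNIV (\<lambda>_. Uu) \<rightarrow>\<^sub>M Uu" for i :: "nat \<times> nat"
    by (rule measurable_component_singleton) simp
  have "P.indep_vars (\<lambda>_. Uu) (\<lambda>i x. x i) UNIV"
  proof (subst P.indep_vars_iff_distr_eq_PiM)
    show "distr (PiM UNIV (\<lambda>_. Uu)) (PiM UNIV (\<lambda>_. Uu)) (\<lambda>x. \<lambda>i\<in>UNIV. x i) =
      PiM UNIV (\<lambda>i. distr (PiM UNIV (\<lambda>_. Uu)) Uu (\<lambda>x. x i))"
      by (simp add: PiM_component restrict_UNIV)
  qed (use rv in auto)
  from P.indep_var_restrict[OF this assms(1)]
  have iv: "P.indep_var (PiM KA (\<lambda>_. Uu)) (\<lambda>x. restrict x KA) (PiM KB (\<lambda>_. Uu)) (\<lambda>x. restrict x KB)"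
    by simp
  from P.indep_varD[OF iv Xa Xb] show ?thesis
    unfolding unif_space_eq by (simp add: vimage_def Int_def conj_commute) 
qed

lemma emeasure_Uu_Ioo: "0 \<le> a \<Longrightarrow> a \<le> b \<Longrightarrow> b \<le> 1 \<Longrightarrow> emeasure Uu {a<..<b} = ennreal (b - a)"
proof -
  assume h: "0 \<le> a" "a \<le> b" "b \<le> 1"
  have "{a<..<b} \<inter> {0<..<(1::real)} = {a<..<b}" using h by auto
  then show ?thesis unfolding Uu_def using h by (simp add: emeasure_uniform_measure divide_ennreal_def)
qed

lemma box_measure:
  assumes ab: "\<And>p. p < n \<Longrightarrow> 0 \<le> a p \<and> a p < b p \<and> b p \<le> 1"
  shows "measure unif_space {x \<in> space unif_space. \<forall>p<n. a p < x (l, p) \<and> x (l, p) < b p} = (\<Prod>p<n. b p - a p)"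
proof -
  interpret product_prob_space "\<lambda>_. Uu" UNIV by (rule pps)
  let ?J = "(\<lambda>p. (l, p)) ` {..<n}"
  let ?X = "\<lambda>i. {a (snd i)<..<b (snd i)}"
  have eq: "{x \<in> space (PiM UNIV (\<lambda>_. Uu)). \<forall>p<n. a p < x (l, p) \<and> x (l, p) < b p} =
    {x \<in> space (PiM UNIV (\<lambda>_. Uu)). \<forall>i\<in>?J. x i \<in> ?X i}"
    by auto
  have "emeasure (PiM UNIV (\<lambda>_. Uu)) {x \<in> space (PiM UNIV (\<lambda>_. Uu)). \<forall>i\<in>?J. x i \<in> ?X i}
     = (\<Prod>i\<in>?J. emeasure Uu (?X i))"
    by (rule emeasure_PiM_Collect) auto
  also have "\<dots> = (\<Prod>p<n. emeasure Uu {a p<..<b p})"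
    by (subst prod.reindex) (auto simp: inj_on_def)
  also have "\<dots> = (\<Prod>p<n. ennreal (b p - a p))"
  proof (rule prod.cong[OF refl])
    fix p assume "p \<in> {..<n}"
    then have "0 \<le> a p" "a p \<le> b p" "b p \<le> 1" using ab[of p] by auto
    then show "emeasure Uu {a p<..<b p} = ennreal (b p - a p)" by (rule emeasure_Uu_Ioo)
  qed
  also have "\<dots> = ennreal (\<Prod>p<n. b p - a p)"
    by (rule prod_ennreal) (use ab in \<open>auto simp: less_imp_le\<close>)
  finally have e1: "emeasure (PiM UNIV (\<lambda>_. Uu)) {x \<in> space (PiM UNIV (\<lambda>_. Uu)). \<forall>i\<in>?J. x i \<in> ?X i}
     = ennreal (\<Prod>p<n. b p - a p)" .
  have nn: "0 \<le> (\<Prod>p<n. b p - a p)"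
    by (rule prod_nonneg) (use ab in \<open>auto simp: less_imp_le\<close>)
  have m: "measure (PiM UNIV (\<lambda>_. Uu)) {x \<in> space (PiM UNIV (\<lambda>_. Uu)). \<forall>i\<in>?J. x i \<in> ?X i}
     = (\<Prod>p<n. b p - a p)"
    unfolding measure_def e1 using nn by (rule enn2real_ennreal)
  show ?thesis using m by (subst unif_space_eq, subst unif_space_eq, subst eq, assumption)
qed

lemma box_sets:
  fixes K :: "(nat \<times> nat) set" and n :: nat
  assumes that: "\<And>p. (l, p) \<in> K"
  shows "{y \<in> space (PiM K (\<lambda>_. Uu)). \<forall>p<n. a p < y (l, p) \<and> y (l, p) < b p} \<in> sets (PiM K (\<lambda>_. Uu))"
proof -
  have "{y \<in> space (PiM K (\<lambda>_. Uu)). \<forall>p\<in>{..<n}. a p < y (l, p) \<and> y (l, p) < b p} \<in> sets (PiM K (\<lambda>_. Uu))"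
  proof (rule sets.sets_Collect_finite_All)
    fix p
    have m: "(\<lambda>y. y (l, p)) \<in> PiM K (\<lambda>_. Uu) \<rightarrow>\<^sub>M Uu"
      by (rule measurable_component_singleton) (rule that)
    have e: "(\<lambda>y. y (l, p)) -` {a p<..<b p} \<inter> space (PiM K (\<lambda>_. Uu)) =
      {y \<in> space (PiM K (\<lambda>_. Uu)). a p < y (l, p) \<and> y (l, p) < b p}" by auto
    have "(\<lambda>y. y (l, p)) -` {a p<..<b p} \<inter> space (PiM K (\<lambda>_. Uu)) \<in> sets (PiM K (\<lambda>_. Uu))"
      by (rule measurable_sets[OF m]) simp
    then show "{y \<in> space (PiM K (\<lambda>_. Uu)). a p < y (l, p) \<and> y (l, p) < b p} \<in> sets (PiM K (\<lambda>_. Uu))"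
      unfolding e .
  qed simp
  then show ?thesis unfolding Ball_def lessThan_iff .
qed

lemma indep_box:
  assumes N: "N > 0" and s: "sum_list ws0 = 1"
  shows "measure unif_space ({x \<in> space unif_space. pc_iter N ws0 x l = t} \<inter>
            {x \<in> space unif_space. \<forall>p<n. a p < x (l, p) \<and> x (l, p) < b p}) =
         measure unif_space {x \<in> space unif_space. pc_iter N ws0 x l = t} *
         measure unif_space {x \<in> space unif_space. \<forall>p<n. a p < x (l, p) \<and> x (l, p) < b p}"
proof -
  define KA where "KA = {i :: nat \<times> nat. fst i < l}"
  define KB where "KB = {i :: nat \<times> nat. fst i = l}"
  define Xa where "Xa = {y \<in> space (PiM KA (\<lambda>_. Uu)). pc_iter N ws0 y l = t}"
  define Xb where "Xb = {y \<in> space (PiM KB (\<lambda>_. Uu)). \<forall>p<n. a p < y (l, p) \<and> y (l, p) < b p}"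
  have dis: "KA \<inter> KB = {}" by (auto simp: KA_def KB_def)
  have Xa: "Xa \<in> sets (PiM KA (\<lambda>_. Uu))"
    unfolding Xa_def by (rule meas_iter[OF N s]) (simp add: KA_def)
  have Xb: "Xb \<in> sets (PiM KB (\<lambda>_. Uu))"
    unfolding Xb_def by (rule box_sets) (simp add: KB_def)
  have hA: "(restrict x KA \<in> Xa) = (pc_iter N ws0 x l = t)" for x
  proof -
    have "pc_iter N ws0 (restrict x KA) l = pc_iter N ws0 x l"
      by (rule iter_dep) (simp add: KA_def)
    then show ?thesis by (simp add: Xa_def space_PiM)
  qed
  have hB: "(restrict x KB \<in> Xb) = (\<forall>p<n. a p < x (l, p) \<and> x (l, p) < b p)" for x
    by (simp add: Xb_def space_PiM KB_def)
  have e1: "{x \<in> space unif_space. restrict x KA \<in> Xa \<and> restrict x KB \<in> Xb} =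
     {x \<in> space unif_space. pc_iter N ws0 x l = t} \<inter>
            {x \<in> space unif_space. \<forall>p<n. a p < x (l, p) \<and> x (l, p) < b p}"
    using hA hB by blast
  have e2: "{x \<in> space unif_space. restrict x KA \<in> Xa} = {x \<in> space unif_space. pc_iter N ws0 x l = t}"
    using hA by blast
  have e3: "{x \<in> space unif_space. restrict x KB \<in> Xb} = 
     {x \<in> space unif_space. \<forall>p<n. a p < x (l, p) \<and> x (l, p) < b p}"
    using hB by blast
  show ?thesis using indep_unif[OF dis Xa Xb] unfolding e1 e2 e3 .
qed

definition wf :: "real list \<Rightarrow> bool" where
  "wf t \<longleftrightarrow> (\<forall>w\<in>set t. w > 0) \<and> sum_list t = 1"

lemma wf_unif: "n > 0 \<Longrightarrow> wf (unif n)"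
  by (simp add: wf_def unif_def sum_list_replicate)

lemma bound_iter:
  assumes N: "N > 0" and s: "sum_list ws0 = 1" and pos: "\<forall>w\<in>set ws0. w > 0"
  shows "\<exists>n. 1 \<le> n \<and> n \<le> 2 * N + length ws0 \<and> pc_iter N ws0 x (Suc l) = unif n"
proof (induction l)
  case 0
  have "cnt N ws0 (\<lambda>p. x (0, p)) \<le> N + length ws0"
    by (rule cnt_le_gen[OF N _ s]) (use pos in auto)
  then show ?case using iter_Suc[OF N s, of x 0]
    by (intro exI[of _ "max 1 (cnt N ws0 (\<lambda>p. x (0, p)))"]) (use N in \<open>simp del: pc_iter.simps(2)\<close>)
next
  case (Suc l)
  then obtain n where n: "1 \<le> n" "n \<le> 2 * N + length ws0" "pc_iter N ws0 x (Suc l) = unif n" by blast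
  have "cnt N (unif n) (\<lambda>p. x (Suc l, p)) \<le> max n (2 * N)"
    by (rule cnt_le_unif[OF N]) (use n in simp)
  then show ?case using iter_Suc[OF N s, of x "Suc l"] n
    by (intro exI[of _ "max 1 (cnt N (unif n) (\<lambda>p. x (Suc l, p)))"]) (use N in \<open>simp del: pc_iter.simps(2)\<close>)
qed

lemma unif_eq_iff: "(unif n = unif m) = (n = m)"
  by (metis length_unif)

theorem proposition1:
  fixes Nobj :: nat and ws0 :: "real list"
  assumes "Nobj > 0" and "ws0 \<noteq> []" and "\<forall>w\<in>set ws0. w > 0" and "sum_list ws0 = 1"
  shows "(\<forall>l. {\<omega> \<in> space unif_space. length (pc_iter Nobj ws0 \<omega> l) \<noteq> Nobj} \<in> sets unif_space)
       \<and> (\<lambda>l. measure unif_space {\<omega> \<in> space unif_space. length (pc_iter Nobj ws0 \<omega> l) = Nobj})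
           \<longlonglongrightarrow> 1
       \<and> (\<exists>lam>0. \<forall>l. measure unif_space {\<omega> \<in> space unif_space. length (pc_iter Nobj ws0 \<omega> l) \<noteq> Nobj}
                      \<le> exp (- real l * lam))"
proof -
  note N = assms(1) and pos = assms(3) and s = assms(4)
  interpret P: prob_space unif_space by (rule ps)
  let ?sp = "space unif_space"
  let ?it = "\<lambda>x l. pc_iter Nobj ws0 x l"
  have meq: "{x \<in> ?sp. ?it x l = t} \<in> sets unif_space" for l t
    using meas_iter[OF N s, of l UNIV t] unfolding unif_space_eq by simp
  let ?T = "insert ws0 (range (\<lambda>m. unif (max 1 m)))"
  have mne: "{x \<in> ?sp. length (?it x l) \<noteq> Nobj} \<in> sets unif_space" for l
  proof -
    have "{x \<in> ?sp. length (?it x l) \<noteq> Nobj} = (\<Union>t\<in>{t\<in>?T. length t \<noteq> Nobj}. {x \<in> ?sp. ?it x l = t})"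
      apply (rule set_eqI)
      subgoal for x using iter_range[OF N s, of x l] by auto
      done
    also have "\<dots> \<in> sets unif_space"
    proof (rule sets.countable_UN'')
      show "countable {t\<in>?T. length t \<noteq> Nobj}" by (rule countable_subset[of _ ?T]) auto
    qed (use meq in auto)
    finally show ?thesis .
  qed
  define Bd where "Bd = 2 * Nobj + length ws0"
  have bd: "\<exists>n. 1 \<le> n \<and> n \<le> Bd \<and> ?it x (Suc l) = unif n" for x l
    unfolding Bd_def by (rule bound_iter[OF N s pos])
  have "\<forall>t. \<exists>a b. wf t \<longrightarrow> ((\<forall>p<length t. 0 \<le> a p \<and> a p < b p \<and> b p \<le> 1) \<and>
     (\<forall>u. (\<forall>p<length t. a p < u p \<and> u p < b p) \<longrightarrow> cnt Nobj t u = Nobj))"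
    using good[OF N] by (auto simp: wf_def)
  then obtain A0 B0 where AB0: "\<And>t. wf t \<Longrightarrow> ((\<forall>p<length t. 0 \<le> A0 t p \<and> A0 t p < B0 t p \<and> B0 t p \<le> 1) \<and>
     (\<forall>u. (\<forall>p<length t. A0 t p < u p \<and> u p < B0 t p) \<longrightarrow> cnt Nobj t u = Nobj))"
    by metis
  define A where "A t = (if t = unif Nobj then (\<lambda>_. 0) else A0 t)" for t
  define B where "B t = (if t = unif Nobj then (\<lambda>_. 1) else B0 t)" for t
  have ABp: "\<And>p. p < length t \<Longrightarrow> 0 \<le> A t p \<and> A t p < B t p \<and> B t p \<le> 1" if "wf t" for t
    using AB0[OF that] by (auto simp: A_def B_def)
  have ABc: "cnt Nobj t u = Nobj" if "wf t" "\<forall>p<length t. A t p < u p \<and> u p < B t p" for t u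
  proof (cases "t = unif Nobj")
    case True
    then show ?thesis using that good_unif[OF N, of u] by (simp add: A_def B_def)
  next
    case False
    then show ?thesis using that AB0[OF that(1)] by (simp add: A_def B_def)
  qed
  define \<pi> where "\<pi> t = (\<Prod>p<length t. B t p - A t p)" for t
  have \<pi>pos: "0 < \<pi> t" if "wf t" for t
    unfolding \<pi>_def by (rule prod_pos) (use ABp[OF that] in auto)
  have \<pi>le: "\<pi> t \<le> 1" if "wf t" for t
    unfolding \<pi>_def by (rule prod_le_1) (use ABp[OF that] in force)
  have \<pi>N: "\<pi> (unif Nobj) = 1" by (simp add: \<pi>_def A_def B_def)
  define Bx where "Bx l t = {x \<in> ?sp. \<forall>p<length t. A t p < x (l, p) \<and> x (l, p) < B t p}" for l t
  have mBx: "measure unif_space (Bx l t) = \<pi> t" if "wf t" for l t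
    unfolding Bx_def \<pi>_def by (rule box_measure) (use ABp[OF that] in auto)
  have sBx: "Bx l t \<in> sets unif_space" for l t
    using box_sets[of l UNIV "length t" "A t" "B t"] unfolding Bx_def unif_space_eq by simp
  have hit: "length (?it x (Suc l)) = Nobj" if "x \<in> Bx l t" "?it x l = t" "wf t" for x l t
  proof -
    have "cnt Nobj t (\<lambda>p. x (l, p)) = Nobj" using that by (intro ABc) (auto simp: Bx_def)
    then show ?thesis using iter_Suc[OF N s, of x l] that N by (simp del: pc_iter.simps(2))
  qed
  have indep: "measure unif_space ({x \<in> ?sp. ?it x l = t} \<inter> Bx l t) =
      measure unif_space {x \<in> ?sp. ?it x l = t} * \<pi> t" if "wf t" for l t
    using indep_box[OF N s, of l t "length t" "A t" "B t"] mBx[OF that, of l] unfolding Bx_def by simp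
  have wf0: "wf ws0" using pos s by (simp add: wf_def)
  define S where "S = insert ws0 (unif ` {1..Bd})"
  have finS: "finite S" and neS: "S \<noteq> {}" by (auto simp: S_def)
  have wfS: "wf t" if "t \<in> S" for t using that wf0 wf_unif by (auto simp: S_def)
  define q where "q = Min (\<pi> ` S)"
  have qpos: "q > 0" unfolding q_def using finS neS \<pi>pos wfS by (subst Min_gr_iff) auto
  have qle: "q \<le> \<pi> t" if "t \<in> S" for t unfolding q_def using finS that by (intro Min_le) auto
  have q1: "q \<le> 1" using qle[of ws0] \<pi>le[OF wf0] by (simp add: S_def)
  define f where "f l = measure unif_space {x \<in> ?sp. length (?it x l) \<noteq> Nobj}" for l
  have f1: "f 1 \<le> 1 - q"
  proof -
    have "{x \<in> ?sp. length (?it x 1) \<noteq> Nobj} \<subseteq> ?sp - Bx 0 ws0"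
      using hit[of _ 0 ws0] wf0 by auto
    then have "f 1 \<le> measure unif_space (?sp - Bx 0 ws0)"
      unfolding f_def by (intro P.finite_measure_mono) (use sBx in auto)
    also have "\<dots> = 1 - \<pi> ws0" using P.prob_compl[OF sBx] mBx[OF wf0] by simp
    also have "\<dots> \<le> 1 - q" using qle[of ws0] by (simp add: S_def)
    finally show ?thesis .
  qed
  have fS: "f (Suc (Suc j)) \<le> (1 - q) * f (Suc j)" for j
  proof -
    let ?l = "Suc j"
    define C where "C n = {x \<in> ?sp. ?it x ?l = unif n}" for n
    define D where "D n = {x \<in> ?sp. ?it x ?l = unif n \<and> n \<noteq> Nobj}" for n
    have sC: "C n \<in> sets unif_space" for n unfolding C_def by (rule meq)
    have sD: "D n \<in> sets unif_space" for n
      by (cases "n = Nobj") (use meq[of ?l "unif n"] in \<open>auto simp: D_def\<close>)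
    have "{x \<in> ?sp. length (?it x (Suc ?l)) \<noteq> Nobj} \<subseteq> (\<Union>n\<in>{1..Bd}. C n - Bx ?l (unif n))"
    proof
      fix x assume x: "x \<in> {x \<in> ?sp. length (?it x (Suc ?l)) \<noteq> Nobj}"
      obtain n where n: "1 \<le> n" "n \<le> Bd" "?it x ?l = unif n" using bd by blast
      have "x \<notin> Bx ?l (unif n)" using hit[of x ?l "unif n"] n x wf_unif[of n] by auto
      then show "x \<in> (\<Union>n\<in>{1..Bd}. C n - Bx ?l (unif n))" using n x by (auto simp: C_def)
    qed
    then have "f (Suc ?l) \<le> measure unif_space (\<Union>n\<in>{1..Bd}. C n - Bx ?l (unif n))"
      unfolding f_def by (intro P.finite_measure_mono) (use sC sBx in auto)
    also have "\<dots> \<le> (\<Sum>n\<in>{1..Bd}. measure unif_space (C n - Bx ?l (unif n)))"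
      by (rule P.finite_measure_subadditive_finite) (use sC sBx in auto)
    also have "\<dots> \<le> (\<Sum>n\<in>{1..Bd}. (1 - q) * measure unif_space (D n))"
    proof (rule sum_mono)
      fix n assume n: "n \<in> {1..Bd}"
      have wn: "wf (unif n)" using n by (intro wf_unif) auto
      have "measure unif_space (C n - Bx ?l (unif n)) = measure unif_space (C n) - measure unif_space (C n \<inter> Bx ?l (unif n))"
        by (rule P.finite_measure_Diff') (use sC sBx in auto)
      also have "\<dots> = measure unif_space (C n) * (1 - \<pi> (unif n))"
        using indep[OF wn, of ?l] unfolding C_def by (simp add: algebra_simps)
      finally have e: "measure unif_space (C n - Bx ?l (unif n)) = measure unif_space (C n) * (1 - \<pi> (unif n))" .
      show "measure unif_space (C n - Bx ?l (unif n)) \<le> (1 - q) * measure unif_space (D n)"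
      proof (cases "n = Nobj")
        case True
        then show ?thesis using e \<pi>N by (simp add: D_def)
      next
        case False
        then have "D n = C n" by (auto simp: C_def D_def)
        moreover have "q \<le> \<pi> (unif n)" using n by (intro qle) (auto simp: S_def)
        ultimately show ?thesis using e
          mult_left_mono[of "1 - \<pi> (unif n)" "1 - q" "measure unif_space (C n)"]
          measure_nonneg[of unif_space "C n"]
          by (simp add: mult.commute)
      qed
    qed
    also have "\<dots> = (1 - q) * measure unif_space (\<Union>n\<in>{1..Bd}. D n)"
      by (subst P.finite_measure_finite_Union)
         (use sD in \<open>auto simp: sum_distrib_left disjoint_family_on_def D_def unif_eq_iff\<close>)
    also have "(\<Union>n\<in>{1..Bd}. D n) = {x \<in> ?sp. length (?it x ?l) \<noteq> Nobj}"
    proof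
      show "(\<Union>n\<in>{1..Bd}. D n) \<subseteq> {x \<in> ?sp. length (?it x ?l) \<noteq> Nobj}"
        by (auto simp: D_def)
    next
      show "{x \<in> ?sp. length (?it x ?l) \<noteq> Nobj} \<subseteq> (\<Union>n\<in>{1..Bd}. D n)"
      proof
        fix x assume x: "x \<in> {x \<in> ?sp. length (?it x ?l) \<noteq> Nobj}"
        obtain n where n: "1 \<le> n" "n \<le> Bd" "?it x ?l = unif n" using bd by blast
        then show "x \<in> (\<Union>n\<in>{1..Bd}. D n)" using x by (auto simp: D_def)
      qed
    qed
    finally show ?thesis unfolding f_def .
  qed
  have fnn: "0 \<le> f l" for l unfolding f_def by simp
  have fpow: "f l \<le> (1 - q) ^ l" for l
  proof (induction l rule: nat_less_induct)
    case (1 l)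
    show ?case
    proof (cases l)
      case 0 then show ?thesis by (simp add: f_def)
    next
      case (Suc j)
      show ?thesis
      proof (cases j)
        case 0 then show ?thesis using f1 Suc by simp
      next
        case (Suc i)
        have "f l \<le> (1 - q) * f j" using fS[of i] Suc \<open>l = Suc j\<close> by simp
        also have "\<dots> \<le> (1 - q) * (1 - q) ^ j"
          using "1"[rule_format, of j] \<open>l = Suc j\<close> q1 by (intro mult_left_mono) auto
        finally show ?thesis using \<open>l = Suc j\<close> by simp
      qed
    qed
  qed
  have fexp: "f l \<le> exp (- real l * q)" for l
  proof -
    have "(1 - q) ^ l \<le> exp (- q) ^ l"
      by (rule power_mono) (use exp_ge_add_one_self[of "- q"] q1 in auto)
    also have "\<dots> = exp (- real l * q)" by (simp add: exp_of_nat_mult[symmetric])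
    finally show ?thesis using fpow[of l] by simp
  qed
  have lim0: "f \<longlonglongrightarrow> 0"
  proof (rule tendsto_sandwich[of "\<lambda>_. 0" _ _ "\<lambda>l. (1 - q) ^ l"])
    show "\<forall>\<^sub>F n in sequentially. 0 \<le> f n" using fnn by simp
    show "\<forall>\<^sub>F n in sequentially. f n \<le> (1 - q) ^ n" using fpow by simp
    show "(\<lambda>n. (1 - q) ^ n) \<longlonglongrightarrow> 0" by (rule LIMSEQ_power_zero) (use qpos q1 in auto)
  qed simp
  have compl: "measure unif_space {x \<in> ?sp. length (?it x l) = Nobj} = 1 - f l" for l
  proof -
    have "{x \<in> ?sp. length (?it x l) = Nobj} = ?sp - {x \<in> ?sp. length (?it x l) \<noteq> Nobj}" by auto
    then show ?thesis using P.prob_compl[OF mne[of l]] unfolding f_def by simp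
  qed
  have "(\<lambda>l. 1 - f l) \<longlonglongrightarrow> 1 - 0" by (intro tendsto_diff tendsto_const lim0)
  then have lim: "(\<lambda>l. measure unif_space {x \<in> ?sp. length (?it x l) = Nobj}) \<longlonglongrightarrow> 1"
    unfolding compl by simp
  show ?thesis using mne lim fexp qpos unfolding f_def by blast
qed

end
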